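(* Let $S$ be a finite set, let $\mathcal{G}\subseteq 2^S$ be connected, and let $\mathcal{C}_1,\mathcal{C}_2\subseteq\mathcal{G}$. Then $\chi(\mathcal{C}_1)=\chi(\mathcal{C}_2)$ if and only if $\mathcal{C}_1\simeq_{\mathrm{ap}(\mathcal{G})}\mathcal{C}_2$.
   Context: An adjacent pair of $2^S$ is a set $\{X,X\setminus\{x\}\}$ with $X\subseteq S$ and $x\in X$. Let $G_S$ be the undirected graph with vertex set $2^S$ whose edges are the adjacent pairs; $\mathcal{G}\subseteq 2^S$ is connected if it induces a connected subgraph of $G_S$. The allowed adjacent pairs relative to $\mathcal{G}$ are $\mathrm{ap}(\mathcal{G})=\{\mathcal{P}\mid\mathcal{P}\text{ an adjacent pair of }2^S,\ \mathcal{P}\subseteq\mathcal{G}\}$. For a set $A$ of adjacent pairs and configurations $\mathcal{C},\mathcal{C}'\subseteq 2^S$, write $\mathcal{C}\to\mathcal{C}'$ if there is $\mathcal{P}\in A$ with $\mathcal{P}\cap\mathcal{C}=\emptyset$ and $\mathcal{C}'=\mathcal{C}\cup\mathcal{P}$, or with $\mathcal{P}\subseteq\mathcal{C}$ and $\mathcal{C}'=\mathcal{C}\setminus\mathcal{P}$; $\simeq_A$ is the reflexive transitive closure of this (symmetric) relation. For a family $\mathcal{D}$ of finite sets, $\chi(\mathcal{D})=\sum_{Y\in\mathcal{D}}(-1)^{|Y|}$. *)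

theory Defs
  imports Main
begin

definition adjacent_pair :: "'a set \<Rightarrow> 'a set set \<Rightarrow> bool" where
  "adjacent_pair S P \<longleftrightarrow> (\<exists>X x. X \<subseteq> S \<and> x \<in> X \<and> P = {X, X - {x}})"

definition adj :: "'a set \<Rightarrow> 'a set \<Rightarrow> 'a set \<Rightarrow> bool" where
  "adj S Y Z \<longleftrightarrow> adjacent_pair S {Y, Z}"

definition connected_family :: "'a set \<Rightarrow> 'a set set \<Rightarrow> bool" where
  "connected_family S G \<longleftrightarrow> G \<subseteq> Pow S \<and>
     (\<forall>Y\<in>G. \<forall>Z\<in>G. (\<lambda>U V. U \<in> G \<and> V \<in> G \<and> adj S U V)\<^sup>*\<^sup>* Y Z)"

definition ap :: "'a set \<Rightarrow> 'a set set \<Rightarrow> 'a set set set" where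
  "ap S G = {P. adjacent_pair S P \<and> P \<subseteq> G}"

definition move :: "'a set set set \<Rightarrow> 'a set set \<Rightarrow> 'a set set \<Rightarrow> bool" where
  "move A C C' \<longleftrightarrow> (\<exists>P\<in>A. (P \<inter> C = {} \<and> C' = C \<union> P) \<or> (P \<subseteq> C \<and> C' = C - P))"

definition equiv_moves :: "'a set set set \<Rightarrow> 'a set set \<Rightarrow> 'a set set \<Rightarrow> bool" where
  "equiv_moves A = (move A)\<^sup>*\<^sup>*"

definition euler_char :: "'a set set \<Rightarrow> int" where
  "euler_char D = (\<Sum>Y\<in>D. (-1) ^ card Y)"

end

theory Submission
  imports Defs
begin

lemma adj_info:
  assumes "finite S" "adj S U V"
  shows "(even (card U) \<longleftrightarrow> odd (card V)) \<and> U \<noteq> V"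
proof -
  have "\<exists>X x. X \<subseteq> S \<and> x \<in> X \<and> {U, V} = {X, X - {x}}"
    using assms(2) unfolding adj_def adjacent_pair_def .
  then obtain X x where X: "X \<subseteq> S" "x \<in> X" "{U, V} = {X, X - {x}}"
    by (elim exE conjE) 
  have fX: "finite X" using X(1) assms(1) finite_subset by blast
  have c: "card X = Suc (card (X - {x}))" using fX X(2)
    using card_Suc_Diff1[OF fX X(2)] by simp
  have ne: "X \<noteq> X - {x}" using X(2) by blast
  have "(U = X \<and> V = X - {x}) \<or> (U = X - {x} \<and> V = X)"
    using X(3) unfolding doubleton_eq_iff by (elim disjE) simp_all
  then show ?thesis using c ne by (elim disjE) simp_all
qed
lemma euler_pair:
  assumes "finite S" "adjacent_pair S P"
  shows "finite P \<and> euler_char P = 0"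
proof -
  have "\<exists>X x. X \<subseteq> S \<and> x \<in> X \<and> P = {X, X - {x}}"
    using assms(2) unfolding adjacent_pair_def .
  then obtain X x where X: "X \<subseteq> S" "x \<in> X" "P = {X, X - {x}}"
    by (elim exE conjE)
  have fX: "finite X" using X(1) assms(1) finite_subset by blast
  have c: "card X = Suc (card (X - {x}))"
    using card_Suc_Diff1[OF fX X(2)] by simp
  have ne: "X \<noteq> X - {x}" using X(2) by blast
  show ?thesis using c ne X(3) by (simp add: euler_char_def)
qed

lemma move_inv:
  assumes "finite S" "move (ap S G) C C'" "finite C"
  shows "finite C' \<and> euler_char C' = euler_char C"
proof -
  obtain P where P: "P \<in> ap S G" "(P \<inter> C = {} \<and> C' = C \<union> P) \<or> (P \<subseteq> C \<and> C' = C - P)"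
    using assms(2) unfolding move_def by blast
  have fp: "finite P" "euler_char P = 0" using euler_pair[OF assms(1)] P(1) unfolding ap_def by auto
  show ?thesis
  proof (cases "P \<inter> C = {} \<and> C' = C \<union> P")
    case True
    then show ?thesis using fp assms(3) sum.union_disjoint[of C P "\<lambda>Y. (-1::int) ^ card Y"]
      unfolding euler_char_def by (simp add: Int_commute)
  next
    case False
    then have "P \<subseteq> C" "C' = C - P" using P(2) by auto
    then show ?thesis using fp assms(3) unfolding euler_char_def
      by (simp add: sum.subset_diff[of P C])
  qed
qed

lemma equiv_inv:
  assumes "finite S" "equiv_moves (ap S G) C C'" "finite C"
  shows "finite C' \<and> euler_char C' = euler_char C"
  using assms(2) unfolding equiv_moves_def
proof (induction rule: rtranclp_induct)
  case base
  then show ?case using assms(3) by simp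
next
  case (step y z)
  then show ?case using move_inv[OF assms(1), of G y z] by simp
qed

lemma move_sym: "move A C D \<Longrightarrow> move A D C"
  unfolding move_def by blast

lemma eq_sym: "equiv_moves A C D \<Longrightarrow> equiv_moves A D C"
  unfolding equiv_moves_def
proof (induction rule: rtranclp_induct)
  case base then show ?case by simp
next
  case (step y z)
  then show ?case by (meson converse_rtranclp_into_rtranclp move_sym)
qed

lemma eq_trans: "equiv_moves A C D \<Longrightarrow> equiv_moves A D E \<Longrightarrow> equiv_moves A C E"
  unfolding equiv_moves_def by simp

lemma eq_add: "P \<in> A \<Longrightarrow> P \<inter> C = {} \<Longrightarrow> equiv_moves A C (C \<union> P)"
  unfolding equiv_moves_def move_def by blast

lemma eq_rem: "P \<in> A \<Longrightarrow> P \<subseteq> C \<Longrightarrow> equiv_moves A C (C - P)"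
  unfolding equiv_moves_def move_def by blast

lemma path_lemma:
  assumes fin: "finite S"
    and "(\<lambda>U V. U \<in> G \<and> V \<in> G \<and> adj S U V)\<^sup>*\<^sup>* U V"
  shows "(even (card U) = even (card V) \<longrightarrow>
            (\<forall>C. U \<in> C \<longrightarrow> V \<notin> C \<longrightarrow> equiv_moves (ap S G) C (C - {U} \<union> {V}))) \<and>
         (even (card U) \<noteq> even (card V) \<longrightarrow>
            (\<forall>C. U \<in> C \<longrightarrow> V \<in> C \<longrightarrow> equiv_moves (ap S G) C (C - {U, V})) \<and>
            (\<forall>C. U \<notin> C \<longrightarrow> V \<notin> C \<longrightarrow> equiv_moves (ap S G) C (C \<union> {U, V})))"
  using assms(2)
proof (induction rule: rtranclp_induct)
  case base
  then show ?case by simp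
next
  case (step W V)
  have WV: "W \<in> G" "V \<in> G" "adj S W V" using step(2) by auto
  have par: "even (card W) \<noteq> even (card V)" "W \<noteq> V" using adj_info[OF fin WV(3)] by auto
  have P: "{W, V} \<in> ap S G" using WV unfolding ap_def adj_def by auto
  have IHa: "\<And>C. even (card U) = even (card W) \<Longrightarrow> U \<in> C \<Longrightarrow> W \<notin> C \<Longrightarrow>
      equiv_moves (ap S G) C (C - {U} \<union> {W})"
    using step(3) by blast
  have IHb: "\<And>C. even (card U) \<noteq> even (card W) \<Longrightarrow> U \<in> C \<Longrightarrow> W \<in> C \<Longrightarrow>
      equiv_moves (ap S G) C (C - {U, W})"
    using step(3) by blast
  have a: "\<And>C. even (card U) = even (card V) \<Longrightarrow> U \<in> C \<Longrightarrow> V \<notin> C \<Longrightarrow>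
     equiv_moves (ap S G) C (C - {U} \<union> {V})"
  proof -
    fix C assume pu: "even (card U) = even (card V)" and uc: "U \<in> C" "V \<notin> C"
    have pw: "even (card U) \<noteq> even (card W)" using pu par by auto
    then have uw: "U \<noteq> W" by auto
    show "equiv_moves (ap S G) C (C - {U} \<union> {V})"
    proof (cases "W \<in> C")
      case True
      have 1: "equiv_moves (ap S G) C (C - {U, W})" using IHb[OF pw uc(1) True] .
      have "{W, V} \<inter> (C - {U, W}) = {}" using uc by auto
      then have 2: "equiv_moves (ap S G) (C - {U, W}) ((C - {U, W}) \<union> {W, V})"
        by (rule eq_add[OF P])
      have "(C - {U, W}) \<union> {W, V} = C - {U} \<union> {V}" using True uw by auto
      then show ?thesis using eq_trans[OF 1 2] by simp
    next
      case False
      have "{W, V} \<inter> C = {}" using uc False by auto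
      then have 1: "equiv_moves (ap S G) C (C \<union> {W, V})" by (rule eq_add[OF P])
      have 2: "equiv_moves (ap S G) (C \<union> {W, V}) ((C \<union> {W, V}) - {U, W})"
        using IHb[OF pw, of "C \<union> {W, V}"] uc by simp
      have "(C \<union> {W, V}) - {U, W} = C - {U} \<union> {V}" using False uc par by auto
      then show ?thesis using eq_trans[OF 1 2] by simp
    qed
  qed
  have b: "\<And>C. even (card U) \<noteq> even (card V) \<Longrightarrow> U \<in> C \<Longrightarrow> V \<in> C \<Longrightarrow>
     equiv_moves (ap S G) C (C - {U, V})"
  proof -
    fix C assume pu: "even (card U) \<noteq> even (card V)" and uc: "U \<in> C" "V \<in> C"
    have pw: "even (card U) = even (card W)" using pu par by auto
    have uv: "U \<noteq> V" using pu by auto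
    show "equiv_moves (ap S G) C (C - {U, V})"
    proof (cases "W \<in> C")
      case True
      have "{W, V} \<subseteq> C" using uc True by auto
      then have 1: "equiv_moves (ap S G) C (C - {W, V})" by (rule eq_rem[OF P])
      show ?thesis
      proof (cases "U = W")
        case True
        then show ?thesis using 1 by (simp add: insert_commute)
      next
        case False
        have "U \<in> C - {W, V}" using uc False uv by auto
        then have 2: "equiv_moves (ap S G) (C - {W, V}) ((C - {W, V}) - {U} \<union> {W})"
          using IHa[OF pw] by simp
        have "(C - {W, V}) - {U} \<union> {W} = C - {U, V}" using True False par by auto
        then show ?thesis using eq_trans[OF 1 2] by simp
      qed
    next
      case False
      have 1: "equiv_moves (ap S G) C (C - {U} \<union> {W})" using IHa[OF pw uc(1) False] .
      have "{W, V} \<subseteq> C - {U} \<union> {W}" using uc uv by auto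
      then have 2: "equiv_moves (ap S G) (C - {U} \<union> {W}) ((C - {U} \<union> {W}) - {W, V})"
        by (rule eq_rem[OF P])
      have "(C - {U} \<union> {W}) - {W, V} = C - {U, V}" using False by auto
      then show ?thesis using eq_trans[OF 1 2] by simp
    qed
  qed
  have c: "\<And>C. even (card U) \<noteq> even (card V) \<Longrightarrow> U \<notin> C \<Longrightarrow> V \<notin> C \<Longrightarrow>
     equiv_moves (ap S G) C (C \<union> {U, V})"
  proof -
    fix C assume pu: "even (card U) \<noteq> even (card V)" and uc: "U \<notin> C" "V \<notin> C"
    have "equiv_moves (ap S G) (C \<union> {U, V}) ((C \<union> {U, V}) - {U, V})" by (rule b[OF pu]) simp_all
    moreover have "(C \<union> {U, V}) - {U, V} = C" using uc by auto
    ultimately show "equiv_moves (ap S G) C (C \<union> {U, V})" using eq_sym by metis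
  qed
  show ?case using a b c by blast
qed

lemma sign_sum:
  assumes "\<forall>a\<in>D. even (card a) = p"
  shows "euler_char D = (if p then 1 else -1) * int (card D)"
proof -
  have "euler_char D = (\<Sum>Y\<in>D. (if p then 1 else -1))"
    unfolding euler_char_def using assms by (intro sum.cong) auto
  then show ?thesis by simp
qed

lemma converse_dir:
  assumes fin: "finite S" and G: "G \<subseteq> Pow S" and con: "connected_family S G"
  shows "\<forall>C1 C2. card (C1 - C2) + card (C2 - C1) = n \<longrightarrow> C1 \<subseteq> G \<longrightarrow> C2 \<subseteq> G \<longrightarrow>
     euler_char C1 = euler_char C2 \<longrightarrow> equiv_moves (ap S G) C1 C2"
proof (induction n rule: less_induct)
  case (less n)
  have fG: "finite G" using G fin by (meson finite_Pow_iff finite_subset)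
  have pl: "\<And>U V. U \<in> G \<Longrightarrow> V \<in> G \<Longrightarrow>
    (even (card U) = even (card V) \<longrightarrow>
            (\<forall>C. U \<in> C \<longrightarrow> V \<notin> C \<longrightarrow> equiv_moves (ap S G) C (C - {U} \<union> {V}))) \<and>
         (even (card U) \<noteq> even (card V) \<longrightarrow>
            (\<forall>C. U \<in> C \<longrightarrow> V \<in> C \<longrightarrow> equiv_moves (ap S G) C (C - {U, V})))"
  proof -
    fix U V assume "U \<in> G" "V \<in> G"
    then have "(\<lambda>U V. U \<in> G \<and> V \<in> G \<and> adj S U V)\<^sup>*\<^sup>* U V"
      using con unfolding connected_family_def by blast
    from path_lemma[OF fin this] show "?thesis U V" by blast
  qed
  show ?case
  proof (intro allI impI)
    fix C1 C2 assume m: "card (C1 - C2) + card (C2 - C1) = n" and s1: "C1 \<subseteq> G" and s2: "C2 \<subseteq> G"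
      and e: "euler_char C1 = euler_char C2"
    have f1: "finite C1" and f2: "finite C2" using s1 s2 fG finite_subset by auto
    show "equiv_moves (ap S G) C1 C2"
    proof (cases "\<exists>a\<in>C1 - C2. \<exists>b\<in>C1 - C2. even (card a) \<noteq> even (card b)")
      case True
      then obtain a b where ab: "a \<in> C1 - C2" "b \<in> C1 - C2" "even (card a) \<noteq> even (card b)" by blast
      have 1: "equiv_moves (ap S G) C1 (C1 - {a, b})" using pl[of a b] ab s1 by blast
      have ev: "euler_char (C1 - {a, b}) = euler_char C1" using equiv_inv[OF fin 1 f1] by simp
      have "card ((C1 - {a,b}) - C2) < card (C1 - C2)"
        using ab f1 by (intro psubset_card_mono) auto
      moreover have "C2 - (C1 - {a,b}) = C2 - C1" using ab by blast
      ultimately have "card ((C1 - {a,b}) - C2) + card (C2 - (C1 - {a,b})) < n" using m by simp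
      then have "equiv_moves (ap S G) (C1 - {a, b}) C2" using less.IH ev e s1 s2
        by (metis Diff_subset subset_trans)
      then show ?thesis using eq_trans[OF 1] by blast
    next
      case nc1: False
      show ?thesis
      proof (cases "\<exists>a\<in>C2 - C1. \<exists>b\<in>C2 - C1. even (card a) \<noteq> even (card b)")
        case True
        then obtain a b where ab: "a \<in> C2 - C1" "b \<in> C2 - C1" "even (card a) \<noteq> even (card b)" by blast
        have 1: "equiv_moves (ap S G) C2 (C2 - {a, b})" using pl[of a b] ab s2 by blast
        have ev: "euler_char (C2 - {a, b}) = euler_char C2" using equiv_inv[OF fin 1 f2] by simp
        have "card ((C2 - {a,b}) - C1) < card (C2 - C1)"
          using ab f2 by (intro psubset_card_mono) auto
        moreover have "C1 - (C2 - {a,b}) = C1 - C2" using ab by blast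
        ultimately have "card (C1 - (C2 - {a,b})) + card ((C2 - {a,b}) - C1) < n" using m by simp
        then have "equiv_moves (ap S G) C1 (C2 - {a, b})" using less.IH ev e s1 s2
          by (metis Diff_subset subset_trans)
        then show ?thesis using eq_trans eq_sym 1 by metis
      next
        case nc2: False
        show ?thesis
        proof (cases "\<exists>a\<in>C1 - C2. \<exists>b\<in>C2 - C1. even (card a) = even (card b)")
          case True
          then obtain a b where ab: "a \<in> C1 - C2" "b \<in> C2 - C1" "even (card a) = even (card b)" by blast
          have 1: "equiv_moves (ap S G) C1 (C1 - {a} \<union> {b})" using pl[of a b] ab s1 s2 by blast
          have ev: "euler_char (C1 - {a} \<union> {b}) = euler_char C1" using equiv_inv[OF fin 1 f1] by simp
          have "(C1 - {a} \<union> {b}) - C2 = (C1 - C2) - {a}" using ab by blast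
          then have c1: "card ((C1 - {a} \<union> {b}) - C2) < card (C1 - C2)"
            using ab f1 by (metis card_Diff1_less finite_Diff)
          have "C2 - (C1 - {a} \<union> {b}) = (C2 - C1) - {b}" using ab by blast
          then have c2: "card (C2 - (C1 - {a} \<union> {b})) < card (C2 - C1)"
            using ab f2 by (metis card_Diff1_less finite_Diff)
          have "card ((C1 - {a} \<union> {b}) - C2) + card (C2 - (C1 - {a} \<union> {b})) < n" using m c1 c2 by simp
          moreover have "C1 - {a} \<union> {b} \<subseteq> G" using s1 s2 ab by blast
          ultimately have "equiv_moves (ap S G) (C1 - {a} \<union> {b}) C2" using less.IH ev e s2
            by metis
          then show ?thesis using eq_trans[OF 1] by blast
        next
          case nc3: False
          obtain p where p1: "\<forall>a\<in>C1 - C2. even (card a) = p" and p2: "\<forall>a\<in>C2 - C1. even (card a) = (\<not> p)"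
          proof (cases "C1 - C2 = {}")
            case True
            show ?thesis
            proof (cases "C2 - C1 = {}")
              case True
              then show ?thesis using that[of True] \<open>C1 - C2 = {}\<close> by blast
            next
              case False
              then obtain b where "b \<in> C2 - C1" by blast
              then show ?thesis using that[of "\<not> even (card b)"] nc2 \<open>C1 - C2 = {}\<close> by blast
            qed
          next
            case False
            then obtain a where "a \<in> C1 - C2" by blast
            then show ?thesis using that[of "even (card a)"] nc1 nc3 by blast
          qed
          have e1: "euler_char C1 = euler_char (C1 - C2) + euler_char (C1 \<inter> C2)"
          proof -
            have "(\<Sum>Y\<in>C1. (-1::int) ^ card Y) = (\<Sum>Y\<in>C1 - C1 \<inter> C2. (-1::int) ^ card Y) + (\<Sum>Y\<in>C1 \<inter> C2. (-1::int) ^ card Y)"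
              by (rule sum.subset_diff) (use f1 in auto)
            moreover have "C1 - C1 \<inter> C2 = C1 - C2" by blast
            ultimately show ?thesis unfolding euler_char_def by simp
          qed
          have e2: "euler_char C2 = euler_char (C2 - C1) + euler_char (C1 \<inter> C2)"
          proof -
            have "(\<Sum>Y\<in>C2. (-1::int) ^ card Y) = (\<Sum>Y\<in>C2 - C1 \<inter> C2. (-1::int) ^ card Y) + (\<Sum>Y\<in>C1 \<inter> C2. (-1::int) ^ card Y)"
              by (rule sum.subset_diff) (use f2 in auto)
            moreover have "C2 - C1 \<inter> C2 = C2 - C1" by blast
            ultimately show ?thesis unfolding euler_char_def by simp
          qed
          have "euler_char (C1 - C2) = euler_char (C2 - C1)" using e e1 e2 by simp
          then have "(if p then 1 else -1) * int (card (C1 - C2)) = (if \<not> p then 1 else -1) * int (card (C2 - C1))"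
            using sign_sum[OF p1] sign_sum[OF p2] by simp
          then have "card (C1 - C2) = 0 \<and> card (C2 - C1) = 0" by (cases p) auto
          then have "C1 - C2 = {}" "C2 - C1 = {}" using f1 f2 by auto
          then have "C1 = C2" by blast
          then show ?thesis unfolding equiv_moves_def by simp
        qed
      qed
    qed
  qed
qed

theorem proposition6p7:
  fixes S :: "'a set" and G C1 C2 :: "'a set set"
  assumes "finite S"
    and "G \<subseteq> Pow S"
    and "connected_family S G"
    and "C1 \<subseteq> G" and "C2 \<subseteq> G"
  shows "euler_char C1 = euler_char C2 \<longleftrightarrow> equiv_moves (ap S G) C1 C2"
proof
  assume "euler_char C1 = euler_char C2"
  then show "equiv_moves (ap S G) C1 C2"
    using converse_dir[OF assms(1-3)] assms(4,5) by blast
next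
  assume h: "equiv_moves (ap S G) C1 C2"
  have "finite G" using assms(1,2) by (meson finite_Pow_iff finite_subset)
  then have "finite C1" using assms(4) finite_subset by auto
  then show "euler_char C1 = euler_char C2" using equiv_inv[OF assms(1) h] by simp
qed

end
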